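(* Let $(\bar x,\bar y)\in\mathbb{R}^2$, $n\ge 3$, and $a_k,b_k\in\mathbb{R}$ with $a_k^2+b_k^2\ne0$ for $k=1,\dots,n$, defining lines $l^k:=\{(x,y): a_k(x-\bar x)+b_k(y-\bar y)-1=0\}$ (none passes through $(\bar x,\bar y)$). Assume $$a_ib_{i^\oplus}-b_ia_{i^\oplus}>0\quad\text{for all } i\in\{1,\dots,n\},$$ and $$-a_k(b_i-b_j)+b_k(a_i-a_j)-(a_ib_j-b_ia_j)<0\quad\text{for all } i\in\{1,\dots,n\},\ j=i^{\oplus},\ k\in\{1,\dots,n\}\setminus\{i,j\}.$$ Let $S:=\{(x,y): a_k(x-\bar x)+b_k(y-\bar y)-1\le0\text{ for all }k\}$. Then the boundary of $S$ is an enclosed, non-degenerate, $n$-sided convex polygon containing $(\bar x,\bar y)$ in its interior, namely the closed polygon formed by the sequence $(V_{12},V_{23},\dots,V_{(n-1)n},V_{n1},V_{12})$ with $V_{ii^\oplus}:=l^i\cap l^{i^\oplus}$, whose $n$ vertices are pairwise distinct with no three cyclically consecutive ones collinear.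
   Context: For $i\in\{1,\dots,n\}$, $i^{\oplus}:=i+1$ if $i\le n-1$ and $n^{\oplus}:=1$. *)

theory Defs
  imports "HOL-Analysis.Analysis"
begin

definition cyc_succ :: "nat \<Rightarrow> nat \<Rightarrow> nat" where
  "cyc_succ n i = (if i \<le> n - 1 then i + 1 else 1)"

definition line_k :: "(nat \<Rightarrow> real) \<Rightarrow> (nat \<Rightarrow> real) \<Rightarrow> real \<Rightarrow> real \<Rightarrow> nat \<Rightarrow> (real \<times> real) set" where
  "line_k a b xb yb k = {(x, y). a k * (x - xb) + b k * (y - yb) - 1 = 0}"

definition region_S :: "nat \<Rightarrow> (nat \<Rightarrow> real) \<Rightarrow> (nat \<Rightarrow> real) \<Rightarrow> real \<Rightarrow> real \<Rightarrow> (real \<times> real) set" where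
  "region_S n a b xb yb = {(x, y). \<forall>k\<in>{1..n}. a k * (x - xb) + b k * (y - yb) - 1 \<le> 0}"

end

theory Submission imports Defs begin

lemma cs_facts:
  assumes "n \<ge> 3" "i \<in> {1..n}"
  shows "cyc_succ n i \<in> {1..n}" "cyc_succ n i \<noteq> i" "cyc_succ n (cyc_succ n i) \<noteq> i"
        "cyc_succ n (cyc_succ n i) \<noteq> cyc_succ n i"
  using assms by (auto simp: cyc_succ_def)

lemma cs_pred:
  assumes "n \<ge> 3" "i \<in> {1..n}"
  obtains q where "q \<in> {1..n}" "cyc_succ n q = i"
proof (cases "i = 1")
  case True then show ?thesis using assms by (intro that[of n]) (auto simp: cyc_succ_def)
next
  case False then show ?thesis using assms by (intro that[of "i - 1"]) (auto simp: cyc_succ_def)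
qed

lemma comb1: fixes c P :: "'a::real_vector" assumes "t > (0::real)"
  shows "(1/(1+t)) *\<^sub>R (c + t *\<^sub>R (c - P)) + (t/(1+t)) *\<^sub>R P = c"
proof -
  have "c + t *\<^sub>R (c - P) = (1+t) *\<^sub>R c - t *\<^sub>R P" by (simp add: algebra_simps)
  hence "(1/(1+t)) *\<^sub>R (c + t *\<^sub>R (c - P)) = ((1/(1+t)) * (1+t)) *\<^sub>R c - ((1/(1+t)) * t) *\<^sub>R P"
    by (simp only: scaleR_right_diff_distrib scaleR_scaleR)
  also have "(1/(1+t)) * (1+t) = 1" using assms by simp
  finally show ?thesis by simp
qed
lemma comb2: fixes c d :: "'a::real_vector" assumes "t > (0::real)"
  shows "(1 - 1/t) *\<^sub>R c + (1/t) *\<^sub>R (c + t *\<^sub>R d) = c + d"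
proof -
  have "(1/t) *\<^sub>R (c + t *\<^sub>R d) = (1/t) *\<^sub>R c + ((1/t) * t) *\<^sub>R d" by (simp add: scaleR_right_distrib)
  also have "(1/t) * t = 1" using assms by simp
  finally show ?thesis by (simp add: algebra_simps)
qed
locale polyg =
  fixes n :: nat and a b :: "nat \<Rightarrow> real" and xb yb :: real
  assumes n3: "n \<ge> 3"
    and nz: "\<forall>k\<in>{1..n}. (a k)\<^sup>2 + (b k)\<^sup>2 \<noteq> 0"
    and c1: "\<forall>i\<in>{1..n}. a i * b (cyc_succ n i) - b i * a (cyc_succ n i) > 0"
    and c2: "\<forall>i\<in>{1..n}. \<forall>k\<in>{1..n} - {i, cyc_succ n i}.
           let j = cyc_succ n i in
           - a k * (b i - b j) + b k * (a i - a j) - (a i * b j - b i * a j) < 0"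
begin

abbreviation s where "s \<equiv> cyc_succ n"
definition F :: "nat \<Rightarrow> real \<times> real \<Rightarrow> real" where
  "F k p = a k * (fst p - xb) + b k * (snd p - yb)"
definition D where "D i = a i * b (s i) - b i * a (s i)"
definition V where "V i = (xb + (b (s i) - b i) / D i, yb + (a i - a (s i)) / D i)"

lemma F_affine: "F k ((1 - u) *\<^sub>R p + u *\<^sub>R q) = (1 - u) * F k p + u * F k q"
  by (simp add: F_def algebra_simps)


lemma S_eq: "region_S n a b xb yb = {p. \<forall>k\<in>{1..n}. F k p \<le> 1}"
  by (auto simp: region_S_def F_def)

lemma line_eq: "line_k a b xb yb k = {p. F k p = 1}"
  by (auto simp: line_k_def F_def)

lemma D_pos: "i \<in> {1..n} \<Longrightarrow> D i > 0"
  using c1 by (simp add: D_def)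

lemma FV_formula: "F k (V i) = (a k * (b (s i) - b i) + b k * (a i - a (s i))) / D i"
proof -
  have "F k (V i) = a k * ((b (s i) - b i) / D i) + b k * ((a i - a (s i)) / D i)"
    by (simp add: F_def V_def)
  also have "\<dots> = (a k * (b (s i) - b i)) / D i + (b k * (a i - a (s i))) / D i"
    by (simp only: times_divide_eq_right)
  also have "\<dots> = (a k * (b (s i) - b i) + b k * (a i - a (s i))) / D i"
    by (simp only: add_divide_distrib)
  finally show ?thesis .
qed

lemma FV_on: assumes "i \<in> {1..n}" shows "F i (V i) = 1" "F (s i) (V i) = 1"
proof -
  have d: "D i \<noteq> 0" using D_pos assms by fastforce
  have "a i * (b (s i) - b i) + b i * (a i - a (s i)) = D i" by (simp add: D_def algebra_simps)
  thus "F i (V i) = 1" using d by (simp add: FV_formula)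
  have "a (s i) * (b (s i) - b i) + b (s i) * (a i - a (s i)) = D i" by (simp add: D_def algebra_simps)
  thus "F (s i) (V i) = 1" using d by (simp add: FV_formula)
qed

lemma FV_lt: assumes "i \<in> {1..n}" "k \<in> {1..n}" "k \<noteq> i" "k \<noteq> s i"
  shows "F k (V i) < 1"
proof -
  have d: "D i > 0" using D_pos assms by fastforce
  have "- a k * (b i - b (s i)) + b k * (a i - a (s i)) - (a i * b (s i) - b i * a (s i)) < 0"
    using c2 assms by (auto simp: Let_def)
  hence "a k * (b (s i) - b i) + b k * (a i - a (s i)) < D i" by (simp add: D_def algebra_simps)
  hence "(a k * (b (s i) - b i) + b k * (a i - a (s i))) / D i < 1" using d by simp
  moreover have "F k (V i) = (a k * (b (s i) - b i) + b k * (a i - a (s i))) / D i"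
    by (rule FV_formula)
  ultimately show ?thesis by simp
qed

lemma FV_iff: assumes "i \<in> {1..n}" "k \<in> {1..n}"
  shows "F k (V i) = 1 \<longleftrightarrow> k = i \<or> k = s i"
  using FV_on FV_lt assms by fastforce

lemma FV_le: assumes "i \<in> {1..n}" "k \<in> {1..n}" shows "F k (V i) \<le> 1"
  using FV_on FV_lt assms by (metis order.order_iff_strict)

lemma two_lines: assumes "i \<in> {1..n}" "F i p = 1" "F (s i) p = 1" shows "p = V i"
proof -
  obtain x y where p: "p = (x, y)" by fastforce
  have d: "D i > 0" using D_pos assms by fastforce
  have e1: "a i * (x - xb) + b i * (y - yb) = 1" and e2: "a (s i) * (x - xb) + b (s i) * (y - yb) = 1"
    using assms p by (auto simp: F_def)
  have "(x - xb) * D i = b (s i) - b i"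
  proof -
    have "(x - xb) * D i = b (s i) * (a i * (x - xb) + b i * (y - yb)) - b i * (a (s i) * (x - xb) + b (s i) * (y - yb))"
      by (simp add: D_def algebra_simps)
    thus ?thesis using e1 e2 by simp
  qed
  moreover have "(y - yb) * D i = a i - a (s i)"
  proof -
    have "(y - yb) * D i = a i * (a (s i) * (x - xb) + b (s i) * (y - yb)) - a (s i) * (a i * (x - xb) + b i * (y - yb))"
      by (simp add: D_def algebra_simps)
    thus ?thesis using e1 e2 by simp
  qed
  ultimately show ?thesis using d p by (simp add: V_def field_simps)
qed

lemma V_inS: "i \<in> {1..n} \<Longrightarrow> V i \<in> region_S n a b xb yb"
  using FV_le by (auto simp: S_eq)

lemma convex_S: "convex (region_S n a b xb yb)"
proof (unfold S_eq, rule convexI, safe)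
  fix p q :: "real \<times> real" and u v :: real and k
  assume p: "\<forall>k\<in>{1..n}. F k p \<le> 1" and q: "\<forall>k\<in>{1..n}. F k q \<le> 1" and u: "0 \<le> u" "0 \<le> v" "u + v = 1"
    and k: "k \<in> {1..n}"
  have uv: "u = 1 - v" using u by simp
  have "F k (u *\<^sub>R p + v *\<^sub>R q) = u * F k p + v * F k q" unfolding uv by (rule F_affine)
  also have "\<dots> \<le> u * 1 + v * 1"
    using p q k u by (intro add_mono mult_left_mono) auto
  finally show "F k (u *\<^sub>R p + v *\<^sub>R q) \<le> 1" using u by simp
qed

lemma hull_sub_S: "convex hull (V ` {1..n}) \<subseteq> region_S n a b xb yb"
  using convex_S V_inS by (intro hull_minimal) auto

lemma par: assumes "k \<in> {1..n}" "F k P = 1" "F k Q = 1"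
  shows "P - Q = ((b k * (fst P - fst Q) - a k * (snd P - snd Q)) / ((a k)\<^sup>2 + (b k)\<^sup>2)) *\<^sub>R (b k, - a k)"
proof -
  define X where "X = fst P - fst Q"
  define Y where "Y = snd P - snd Q"
  define N where "N = (a k)\<^sup>2 + (b k)\<^sup>2"
  have N: "N \<noteq> 0" using nz assms N_def by auto
  have e: "a k * X + b k * Y = 0" using assms(2,3)
    by (simp add: F_def algebra_simps X_def Y_def)
  have 1: "(b k * X - a k * Y) * b k = X * N"
  proof -
    have "(b k * X - a k * Y) * b k = X * N - a k * (a k * X + b k * Y)"
      by (simp add: power2_eq_square algebra_simps N_def)
    thus ?thesis using e by simp
  qed
  have 2: "(b k * X - a k * Y) * (- a k) = Y * N"
  proof -
    have "(b k * X - a k * Y) * (- a k) = Y * N - b k * (a k * X + b k * Y)"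
      by (simp add: power2_eq_square algebra_simps N_def)
    thus ?thesis using e by simp
  qed
  have "X = (b k * X - a k * Y) / N * b k" using 1 N by (simp add: field_simps)
  moreover have "Y = (b k * X - a k * Y) / N * (- a k)" using 2 N by (simp add: field_simps)
  ultimately show ?thesis by (simp add: prod_eq_iff X_def Y_def N_def)
qed

lemma on_line_seg:
  assumes k: "k \<in> {1..n}" and q: "q \<in> {1..n}" "s q = k"
    and pS: "p \<in> region_S n a b xb yb" and pk: "F k p = 1"
  shows "p \<in> closed_segment (V q) (V k)"
proof -
  define A where "A = V q"
  define B where "B = V k"
  have sk: "s k \<in> {1..n}" "s k \<noteq> k" "s k \<noteq> q" using cs_facts[OF n3 k] cs_facts[OF n3 q(1)] q by auto
  have qk: "q \<noteq> k" "q \<noteq> s k" using cs_facts[OF n3 q(1)] q by auto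
  have FA: "F k A = 1" using FV_on q A_def by auto
  have FB: "F k B = 1" using FV_on k B_def by auto
  have hA: "F (s k) A < 1" using FV_lt[OF q(1) sk(1)] sk q A_def by auto
  have hB: "F (s k) B = 1" using FV_on k B_def by auto
  have gA: "F q A = 1" using FV_on q A_def by auto
  have gB: "F q B < 1" using FV_lt[OF k q(1)] qk B_def by auto
  define w where "w = (b k, - a k)"
  obtain \<alpha> where al: "p - A = \<alpha> *\<^sub>R w" using par[OF k pk FA] w_def by blast
  obtain \<beta> where be: "B - A = \<beta> *\<^sub>R w" using par[OF k FB FA] w_def by blast
  have "\<beta> \<noteq> 0" using be hA hB by auto
  define t where "t = \<alpha> / \<beta>"
  have "p - A = t *\<^sub>R (B - A)" using al be \<open>\<beta> \<noteq> 0\<close> by (simp add: t_def)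
  hence pt: "p = (1 - t) *\<^sub>R A + t *\<^sub>R B" by (simp add: algebra_simps)
  have "F (s k) p \<le> 1" using pS sk by (auto simp: S_eq)
  hence "(1 - t) * F (s k) A + t * 1 \<le> 1" using pt F_affine hB by metis
  hence "(1 - t) * (1 - F (s k) A) \<ge> 0" by (simp add: algebra_simps)
  hence t1: "t \<le> 1" using hA by (simp add: zero_le_mult_iff)
  have "F q p \<le> 1" using pS q by (auto simp: S_eq)
  hence "(1 - t) * 1 + t * F q B \<le> 1" using pt F_affine gA by metis
  hence "t * (1 - F q B) \<ge> 0" by (simp add: algebra_simps)
  hence t0: "t \<ge> 0" using gB by (simp add: zero_le_mult_iff)
  show ?thesis unfolding closed_segment_def A_def[symmetric] B_def[symmetric] using t0 t1 pt by blast
qed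

lemma pos_dir: assumes "(d1, d2) \<noteq> (0::real, 0::real)"
  shows "\<exists>k\<in>{1..n}. a k * d1 + b k * d2 > 0"
proof (rule ccontr)
  assume H: "\<not> ?thesis"
  define g where "g k = a k * d1 + b k * d2" for k
  have gle: "\<forall>k\<in>{1..n}. g k \<le> 0" using H g_def by auto
  define M where "M = Max (g ` {1..n})"
  have ne: "{1..n} \<noteq> {}" using n3 by auto
  have "M \<in> g ` {1..n}" unfolding M_def using ne by (intro Max_in) auto
  then obtain m where m: "m \<in> {1..n}" "g m = M" by auto
  have mx: "\<forall>k\<in>{1..n}. g k \<le> g m" using m by (auto simp: M_def)
  obtain q where q: "q \<in> {1..n}" "s q = m" using cs_pred[OF n3 m(1)] by blast
  define r where "r = s m"
  have r: "r \<in> {1..n}" "r \<noteq> m" "r \<noteq> q" using cs_facts[OF n3 m(1)] cs_facts[OF n3 q(1)] q r_def by auto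
  define Pq where "Pq = a q * b m - b q * a m"
  define Pm where "Pm = a m * b r - b m * a r"
  have Pq: "Pq > 0" using c1 q Pq_def by force
  have Pm: "Pm > 0" using c1 m r_def Pm_def by force
  have "- a r * (b q - b m) + b r * (a q - a m) - (a q * b m - b q * a m) < 0"
    using c2 q r by (force simp: Let_def)
  define C where "C = (a m - a q) * (b r - b m) - (b m - b q) * (a r - a m)"
  have C: "C > 0" using \<open>- a r * (b q - b m) + b r * (a q - a m) - (a q * b m - b q * a m) < 0\<close>
    by (simp add: C_def algebra_simps)
  have id: "C * (- g m) = - Pm * (g m - g q) + Pq * (g r - g m)"
    by (simp add: C_def Pm_def Pq_def g_def algebra_simps)
  have "g m \<le> 0" using gle m(1) by blast
  hence L: "C * (- g m) \<ge> 0" using C by (intro mult_nonneg_nonneg) linarith+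
  have "g q \<le> g m" using mx q(1) by blast
  hence T1: "Pm * (g m - g q) \<ge> 0" using Pm by (intro mult_nonneg_nonneg) linarith+
  have "g r \<le> g m" using mx r(1) by blast
  hence T2: "Pq * (g r - g m) \<le> 0" using Pq by (intro mult_nonneg_nonpos) linarith+
  have "Pm * (g m - g q) = 0" using L T1 T2 id by linarith
  hence gq: "g q = g m" using Pm by simp
  have "C * (- g m) = 0" using L T1 T2 id by linarith
  hence gm: "g m = 0" using C by simp
  have "d1 * Pq = b m * g q - b q * g m" by (simp add: Pq_def g_def algebra_simps)
  hence d1: "d1 = 0" using gq gm Pq by simp
  have "d2 * Pq = a q * g m - a m * g q" by (simp add: Pq_def g_def algebra_simps)
  hence d2: "d2 = 0" using gq gm Pq by simp
  show False using assms d1 d2 by simp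
qed

lemma F_ray: "F k ((xb, yb) + t *\<^sub>R (d1, d2)) = t * (a k * d1 + b k * d2)"
  by (simp add: F_def algebra_simps)

lemma exit_pt:
  assumes "d \<noteq> (0::real \<times> real)"
  obtains t k where "t > 0" "k \<in> {1..n}" "F k ((xb, yb) + t *\<^sub>R d) = 1"
    "(xb, yb) + t *\<^sub>R d \<in> region_S n a b xb yb"
    "(xb, yb) + d \<in> region_S n a b xb yb \<longrightarrow> t \<ge> 1"
proof -
  obtain d1 d2 where d: "d = (d1, d2)" by fastforce
  define g where "g k = a k * d1 + b k * d2" for k
  define M where "M = Max (g ` {1..n})"
  have ne: "{1..n} \<noteq> {}" using n3 by auto
  have "M \<in> g ` {1..n}" unfolding M_def using ne by (intro Max_in) auto
  then obtain m where m: "m \<in> {1..n}" "g m = M" by auto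
  have mx: "\<forall>k\<in>{1..n}. g k \<le> M" by (auto simp: M_def)
  have "(d1, d2) \<noteq> (0, 0)" using assms d by (simp add: zero_prod_def)
  then obtain k0 where "k0 \<in> {1..n}" "a k0 * d1 + b k0 * d2 > 0" using pos_dir by blast
  hence "k0 \<in> {1..n}" "g k0 > 0" using g_def by auto
  hence Mp: "M > 0" using mx by fastforce
  define t where "t = 1 / M"
  have t: "t > 0" using Mp t_def by simp
  have "F m ((xb, yb) + t *\<^sub>R d) = t * g m" unfolding d F_ray g_def by simp
  hence Fm: "F m ((xb, yb) + t *\<^sub>R d) = 1" using m Mp t_def by simp
  have inS: "(xb, yb) + t *\<^sub>R d \<in> region_S n a b xb yb"
  proof -
    have "\<forall>k\<in>{1..n}. F k ((xb, yb) + t *\<^sub>R d) \<le> 1"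
    proof
      fix k assume k: "k \<in> {1..n}"
      have "F k ((xb, yb) + t *\<^sub>R d) = t * g k" unfolding d F_ray g_def by simp
      also have "\<dots> = g k / M" by (simp add: t_def)
      also have "\<dots> \<le> 1" using mx k Mp by simp
      finally show "F k ((xb, yb) + t *\<^sub>R d) \<le> 1" .
    qed
    thus ?thesis by (simp add: S_eq)
  qed
  have "t \<ge> 1" if "(xb, yb) + d \<in> region_S n a b xb yb"
  proof -
    have "F m ((xb, yb) + 1 *\<^sub>R d) \<le> 1" using that m by (simp add: S_eq)
    moreover have "F m ((xb, yb) + 1 *\<^sub>R d) = 1 * g m" unfolding d F_ray g_def by simp
    ultimately have "M \<le> 1" using m by simp
    thus ?thesis using Mp t_def by simp
  qed
  thus ?thesis using that t m Fm inS by blast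
qed

abbreviation H where "H \<equiv> convex hull (V ` {1..n})"

lemma line_in_H: assumes "p \<in> region_S n a b xb yb" "k \<in> {1..n}" "F k p = 1" shows "p \<in> H"
proof -
  obtain q where q: "q \<in> {1..n}" "s q = k" using cs_pred[OF n3 assms(2)] by blast
  have "p \<in> closed_segment (V q) (V k)" using on_line_seg[OF assms(2) q assms(1,3)] .
  also have "\<dots> \<subseteq> H" unfolding segment_convex_hull
  proof (rule hull_mono)
    show "{V q, V k} \<subseteq> V ` {1..n}" using q(1) assms(2) by blast
  qed
  finally show ?thesis .
qed

lemma center_H: "(xb, yb) \<in> H"
proof -
  have one: "1 \<in> {1..n}" using n3 by auto
  define d where "d = (xb, yb) - V 1"
  have "F 1 (xb, yb) = 0" by (simp add: F_def)
  hence "V 1 \<noteq> (xb, yb)" using FV_on(1)[OF one] by auto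
  hence "d \<noteq> 0" by (simp add: d_def)
  then obtain t k where t: "t > 0" "k \<in> {1..n}" "F k ((xb, yb) + t *\<^sub>R d) = 1"
    "(xb, yb) + t *\<^sub>R d \<in> region_S n a b xb yb"
    "(xb, yb) + d \<in> region_S n a b xb yb \<longrightarrow> t \<ge> 1" by (rule exit_pt)
  have w: "(xb, yb) + t *\<^sub>R d \<in> H" by (rule line_in_H[OF t(4) t(2) t(3)])
  have v1: "V 1 \<in> H" by (rule hull_inc, rule imageI, rule one)
  have "(1 / (1 + t)) *\<^sub>R ((xb, yb) + t *\<^sub>R d) + (t / (1 + t)) *\<^sub>R V 1 \<in> H"
  proof (rule convexD[OF convex_convex_hull w v1])
    show "0 \<le> 1 / (1 + t)" "0 \<le> t / (1 + t)" using t(1) by simp_all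
    have "1 / (1 + t) + t / (1 + t) = (1 + t) / (1 + t)" by (rule add_divide_distrib[symmetric])
    thus "1 / (1 + t) + t / (1 + t) = 1" using t(1) by simp
  qed
  moreover have "(1 / (1 + t)) *\<^sub>R ((xb, yb) + t *\<^sub>R d) + (t / (1 + t)) *\<^sub>R V 1 = (xb, yb)"
    unfolding d_def by (rule comb1[OF t(1)])
  ultimately show ?thesis by metis
qed

lemma S_sub_H: "region_S n a b xb yb \<subseteq> H"
proof
  fix v assume v: "v \<in> region_S n a b xb yb"
  show "v \<in> H"
  proof (cases "v = (xb, yb)")
    case True then show ?thesis using center_H by simp
  next
    case False
    define d where "d = v - (xb, yb)"
    have "d \<noteq> 0" using False d_def by simp
    then obtain t k where t: "t > 0" "k \<in> {1..n}" "F k ((xb, yb) + t *\<^sub>R d) = 1"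
      "(xb, yb) + t *\<^sub>R d \<in> region_S n a b xb yb" "(xb, yb) + d \<in> region_S n a b xb yb \<longrightarrow> t \<ge> 1"
      by (rule exit_pt)
    have t1: "t \<ge> 1" using t(5) v d_def by simp
    have w: "(xb, yb) + t *\<^sub>R d \<in> H" by (rule line_in_H[OF t(4) t(2) t(3)])
    have "(1 - 1 / t) *\<^sub>R (xb, yb) + (1 / t) *\<^sub>R ((xb, yb) + t *\<^sub>R d) \<in> H"
    proof (rule convexD_alt[OF convex_convex_hull center_H w])
      show "0 \<le> 1 / t" using t(1) by simp
      show "1 / t \<le> 1" using t1 by simp
    qed
    moreover have "(1 - 1 / t) *\<^sub>R (xb, yb) + (1 / t) *\<^sub>R ((xb, yb) + t *\<^sub>R d) = v"
      unfolding comb2[OF t(1)] d_def by (metis add.commute diff_add_cancel)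
    ultimately show ?thesis by metis
  qed
qed

lemma open_T: "open {p. \<forall>k\<in>{1..n}. F k p < 1}"
proof -
  have eq: "{p. \<forall>k\<in>{1..n}. F k p < 1} = (\<Inter>k\<in>{1..n}. {p. F k p < 1})" by auto
  moreover have "open {p. F k p < 1}" for k
    unfolding F_def by (intro open_Collect_less continuous_intros)
  hence X: "open (\<Inter>k\<in>{1..n}. {p. F k p < 1})" by (intro open_INT) auto
  show ?thesis unfolding eq by (rule X)
qed

lemma closed_S: "closed (region_S n a b xb yb)"
proof -
  have eq: "region_S n a b xb yb = (\<Inter>k\<in>{1..n}. {p. F k p \<le> 1})" by (auto simp: S_eq)
  moreover have "closed {p. F k p \<le> 1}" for k
    unfolding F_def by (intro closed_Collect_le continuous_intros)
  hence X: "closed (\<Inter>k\<in>{1..n}. {p. F k p \<le> 1})" by (intro closed_INT) auto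
  show ?thesis unfolding eq by (rule X)
qed

lemma T_interior: "{p. \<forall>k\<in>{1..n}. F k p < 1} \<subseteq> interior (region_S n a b xb yb)"
  by (rule interior_maximal[OF _ open_T]) (auto simp: S_eq less_imp_le)

lemma not_interior: assumes k: "k \<in> {1..n}" and p: "F k p = 1"
  shows "p \<notin> interior (region_S n a b xb yb)"
proof
  assume "p \<in> interior (region_S n a b xb yb)"
  then obtain e where e: "e > 0" "ball p e \<subseteq> region_S n a b xb yb" by (auto simp: mem_interior)
  have N: "(a k)\<^sup>2 + (b k)\<^sup>2 > 0" using nz k by (simp add: sum_power2_gt_zero_iff)
  hence A: "\<bar>a k\<bar> + \<bar>b k\<bar> > 0" by (auto simp: sum_power2_gt_zero_iff)
  define X where "X = \<bar>a k\<bar> + \<bar>b k\<bar>"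
  have A: "X > 0" using A X_def by simp
  define t where "t = e / (2 * X)"
  have t: "t > 0" using e A t_def by simp
  define w where "w = p + (t * a k, t * b k)"
  have wp: "w - p = (t * a k, t * b k)" by (simp add: w_def)
  have "dist p w = norm (t * a k, t * b k)" unfolding wp[symmetric] by (simp add: dist_norm norm_minus_commute)
  also have "\<dots> \<le> norm (t * a k) + norm (t * b k)" by (rule norm_Pair_le)
  also have "\<dots> = t * X" using t by (simp add: abs_mult algebra_simps X_def)
  also have "\<dots> = e / 2" using A by (simp add: t_def)
  also have "\<dots> < e" using e by simp
  finally have "w \<in> region_S n a b xb yb" using e by auto
  hence "F k w \<le> 1" using k by (simp add: S_eq)
  moreover have "F k w = F k p + t * ((a k)\<^sup>2 + (b k)\<^sup>2)"
    by (simp add: F_def w_def power2_eq_square algebra_simps)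
  moreover have "t * ((a k)\<^sup>2 + (b k)\<^sup>2) > 0" by (rule mult_pos_pos[OF t N])
  ultimately show False using p by linarith
qed

lemma seg_line: assumes i: "i \<in> {1..n}" and p: "p \<in> closed_segment (V i) (V (s i))"
  shows "F (s i) p = 1"
proof -
  obtain u where pu: "p = (1 - u) *\<^sub>R V i + u *\<^sub>R V (s i)" using p by (auto simp: closed_segment_def)
  have 1: "F (s i) (V (s i)) = 1" using FV_on(1) cs_facts(1)[OF n3 i] by blast
  have 2: "F (s i) (V i) = 1" using FV_on(2)[OF i] .
  have "F (s i) p = (1 - u) * F (s i) (V i) + u * F (s i) (V (s i))" unfolding pu by (rule F_affine)
  thus ?thesis unfolding 1 2 by simp
qed

lemma frontier_eq: "frontier (region_S n a b xb yb) = (\<Union>i\<in>{1..n}. closed_segment (V i) (V (s i)))"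
proof
  show "frontier (region_S n a b xb yb) \<subseteq> (\<Union>i\<in>{1..n}. closed_segment (V i) (V (s i)))"
  proof
    fix p assume "p \<in> frontier (region_S n a b xb yb)"
    hence pS: "p \<in> region_S n a b xb yb" and pI: "p \<notin> interior (region_S n a b xb yb)"
      using closed_S by (auto simp: frontier_def)
    then obtain k where k: "k \<in> {1..n}" "\<not> F k p < 1" using T_interior by blast
    hence Fk: "F k p = 1" using pS by (force simp: S_eq)
    obtain q where q: "q \<in> {1..n}" "s q = k" using cs_pred[OF n3 k(1)] by blast
    show "p \<in> (\<Union>i\<in>{1..n}. closed_segment (V i) (V (s i)))"
      using on_line_seg[OF k(1) q pS Fk] q by auto
  qed
next
  show "(\<Union>i\<in>{1..n}. closed_segment (V i) (V (s i))) \<subseteq> frontier (region_S n a b xb yb)"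
  proof safe
    fix i p assume i: "i \<in> {1..n}" and p: "p \<in> closed_segment (V i) (V (s i))"
    have "closed_segment (V i) (V (s i)) \<subseteq> H"
      unfolding segment_convex_hull
    proof (rule hull_mono)
      show "{V i, V (s i)} \<subseteq> V ` {1..n}" using i cs_facts(1)[OF n3 i] by blast
    qed
    hence pS: "p \<in> region_S n a b xb yb" using p hull_sub_S by blast
    have "p \<notin> interior (region_S n a b xb yb)"
      using not_interior[OF cs_facts(1)[OF n3 i] seg_line[OF i p]] .
    thus "p \<in> frontier (region_S n a b xb yb)" using pS closed_S by (simp add: frontier_def)
  qed
qed

lemma V_inj: "inj_on V {1..n}"
proof
  fix i m assume i: "i \<in> {1..n}" and m: "m \<in> {1..n}" and e: "V i = V m"
  show "i = m"
  proof (rule ccontr)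
    assume ne: "i \<noteq> m"
    have "F i (V m) = 1" using e FV_on(1)[OF i] by simp
    hence "i = s m" using FV_iff[OF m i] ne by auto
    have "F m (V i) = 1" using e FV_on(1)[OF m] by simp
    hence "m = s i" using FV_iff[OF i m] ne by auto
    show False using cs_facts(3)[OF n3 i] \<open>i = s m\<close> \<open>m = s i\<close> by metis
  qed
qed

lemma V_noncol: assumes i: "i \<in> {1..n}" shows "\<not> collinear {V i, V (s i), V (s (s i))}"
proof
  assume col: "collinear {V i, V (s i), V (s (s i))}"
  define j where "j = s i"
  define l where "l = s j"
  have j: "j \<in> {1..n}" "j \<noteq> i" using cs_facts[OF n3 i] j_def by auto
  have l: "l \<in> {1..n}" "l \<noteq> j" "l \<noteq> i" using cs_facts[OF n3 j(1)] cs_facts[OF n3 i] j_def l_def by auto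
  have jsl: "j \<noteq> s l" using cs_facts(3)[OF n3 j(1)] l_def by simp
  have Fl: "F j (V l) < 1" using FV_lt[OF l(1) j(1)] l jsl by auto
  have Fi: "F j (V i) = 1" using FV_on(2)[OF i] j_def by simp
  have Fj: "F j (V j) = 1" using FV_on(1)[OF j(1)] by simp
  have "V i \<noteq> V j" using inj_onD[OF V_inj _ i j(1)] j(2) by auto
  have col': "collinear {V i, V j, V l}" using col unfolding j_def l_def .
  have "{V j, V l} = {V l, V j}" by (rule insert_commute)
  hence "collinear {V i, V l, V j}" using col' by metis
  then obtain u where "V l = u *\<^sub>R V i + (1 - u) *\<^sub>R V j"
    using \<open>V i \<noteq> V j\<close> unfolding collinear_3_expand by blast
  hence eq: "V l = (1 - (1 - u)) *\<^sub>R V i + (1 - u) *\<^sub>R V j" by simp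
  have "F j (V l) = (1 - (1 - u)) * F j (V i) + (1 - u) * F j (V j)" unfolding eq by (rule F_affine)
  hence "F j (V l) = 1" unfolding Fi Fj by simp
  thus False using Fl by simp
qed

end

theorem corollary1:
  fixes n :: nat and a b :: "nat \<Rightarrow> real" and xb yb :: real
  assumes "n \<ge> 3"
    and "\<forall>k\<in>{1..n}. (a k)\<^sup>2 + (b k)\<^sup>2 \<noteq> 0"
    and "\<forall>i\<in>{1..n}. a i * b (cyc_succ n i) - b i * a (cyc_succ n i) > 0"
    and "\<forall>i\<in>{1..n}. \<forall>k\<in>{1..n} - {i, cyc_succ n i}.
           let j = cyc_succ n i in
           - a k * (b i - b j) + b k * (a i - a j) - (a i * b j - b i * a j) < 0"
  shows "\<exists>V :: nat \<Rightarrow> real \<times> real.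
           (\<forall>i\<in>{1..n}. line_k a b xb yb i \<inter> line_k a b xb yb (cyc_succ n i) = {V i})
         \<and> inj_on V {1..n}
         \<and> (\<forall>i\<in>{1..n}. \<not> collinear {V i, V (cyc_succ n i), V (cyc_succ n (cyc_succ n i))})
         \<and> frontier (region_S n a b xb yb) = (\<Union>i\<in>{1..n}. closed_segment (V i) (V (cyc_succ n i)))
         \<and> region_S n a b xb yb = convex hull (V ` {1..n})
         \<and> (xb, yb) \<in> interior (region_S n a b xb yb)"
proof -
  interpret P: polyg n a b xb yb using assms by unfold_locales
  have L: "\<forall>i\<in>{1..n}. line_k a b xb yb i \<inter> line_k a b xb yb (cyc_succ n i) = {P.V i}"
  proof
    fix i assume i: "i \<in> {1..n}"
    show "line_k a b xb yb i \<inter> line_k a b xb yb (cyc_succ n i) = {P.V i}"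
      unfolding P.line_eq using P.two_lines[OF i] P.FV_on[OF i] by blast
  qed
  have C: "(xb, yb) \<in> interior (region_S n a b xb yb)"
  proof -
    have "(xb, yb) \<in> {p. \<forall>k\<in>{1..n}. P.F k p < 1}" by (simp add: P.F_def)
    thus ?thesis using P.T_interior by blast
  qed
  have E: "region_S n a b xb yb = convex hull (P.V ` {1..n})"
    using P.S_sub_H P.hull_sub_S by (rule subset_antisym)
  have N: "\<forall>i\<in>{1..n}. \<not> collinear {P.V i, P.V (cyc_succ n i), P.V (cyc_succ n (cyc_succ n i))}"
    using P.V_noncol by blast
  show ?thesis
    apply (rule exI[of _ P.V])
    using L P.V_inj N P.frontier_eq E C by (intro conjI)
qed

end
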